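(* Let $G$ be a finite irreducible ordered graph, and suppose that $G$ has at most one (up to order-isomorphism) irreducible induced ordered subgraph of order $3$, and at most one of order $4$. Then $G \in \mathcal{J}$.
   Context: Ordered graphs of order $n$ have vertex set $[n]$ with the natural order. A pair of vertices $u<v$ separates the edges of $G$ if every edge $ij$ ($i<j$) has $j\leqslant u$ or $v\leqslant i$; $G$ is irreducible if no pair separates its edges. For $n\in\mathbb{N}$: $J^{(n)}_1=K_n$; $J^{(n)}_2$ on $[n]$ with edge set $\{1n\}$ if $n\geqslant2$ (empty if $n=1$); $J^{(n)}_3$ on $[n]$ with edges $\{1i: 2\leqslant i\leqslant n\}$; $J^{(n)}_4$ on $[n]$ with edges $\{in: 1\leqslant i\leqslant n-1\}$; $L^{(n)}$ on $[n]$ with edges $\{i(i+1): 1\leqslant i\leqslant n-1\}$; $Q_1$ on $[4]$ with edges $\{13,24\}$; $Q_2$ on $[4]$ with edges $\{14,23\}$. $\mathcal{J}$ is the set of all ordered graphs $J^{(n)}_i$ ($i\in[4]$, $n\in\mathbb{N}$), $L^{(n)}$ ($n\in\mathbb{N}$), $Q_1$ and $Q_2$. *)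

theory Defs
  imports Main
begin

text \<open>An ordered graph of order n: vertex set {1..n} with the natural order;
  edges are stored as pairs (i,j) with i < j.\<close>
type_synonym ograph = "nat \<times> (nat \<times> nat) set"

definition ordered_graph :: "ograph \<Rightarrow> bool" where
  "ordered_graph G \<longleftrightarrow> 1 \<le> fst G \<and>
     snd G \<subseteq> {(i,j). 1 \<le> i \<and> i < j \<and> j \<le> fst G}"

definition separates :: "ograph \<Rightarrow> nat \<Rightarrow> nat \<Rightarrow> bool" where
  "separates G u v \<longleftrightarrow> u \<in> {1..fst G} \<and> v \<in> {1..fst G} \<and> u < v \<and>
     (\<forall>(i,j)\<in>snd G. j \<le> u \<or> v \<le> i)"

definition oirreducible :: "ograph \<Rightarrow> bool" where
  "oirreducible G \<longleftrightarrow> \<not> (\<exists>u v. separates G u v)"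

text \<open>Induced ordered subgraph on S, relabelled order-preservingly onto {1..card S}
  (this is the canonical representative of its order-isomorphism class).\<close>
definition induced :: "ograph \<Rightarrow> nat set \<Rightarrow> ograph" where
  "induced G S = (let s = sorted_list_of_set S in
     (card S, {(i,j). 1 \<le> i \<and> i < j \<and> j \<le> card S \<and> (s ! (i - 1), s ! (j - 1)) \<in> snd G}))"

definition J1 :: "nat \<Rightarrow> ograph" where
  "J1 n = (n, {(i,j). 1 \<le> i \<and> i < j \<and> j \<le> n})"
definition J2 :: "nat \<Rightarrow> ograph" where
  "J2 n = (n, if 2 \<le> n then {(1,n)} else {})"
definition J3 :: "nat \<Rightarrow> ograph" where
  "J3 n = (n, {(1,i) | i. 2 \<le> i \<and> i \<le> n})"
definition J4 :: "nat \<Rightarrow> ograph" where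
  "J4 n = (n, {(i,n) | i. 1 \<le> i \<and> i \<le> n - 1})"
definition Lg :: "nat \<Rightarrow> ograph" where
  "Lg n = (n, {(i,i+1) | i. 1 \<le> i \<and> i \<le> n - 1})"
definition Q1 :: ograph where "Q1 = (4, {(1,3),(2,4)})"
definition Q2 :: ograph where "Q2 = (4, {(1,4),(2,3)})"

definition calJ :: "ograph set" where
  "calJ = {G. \<exists>n\<ge>1. G = J1 n \<or> G = J2 n \<or> G = J3 n \<or> G = J4 n \<or> G = Lg n} \<union> {Q1, Q2}"

text \<open>Order-isomorphism classes of irreducible induced ordered subgraphs of order k.\<close>
definition irr_induced :: "ograph \<Rightarrow> nat \<Rightarrow> ograph set" where
  "irr_induced G k = {H. \<exists>S. S \<subseteq> {1..fst G} \<and> card S = k \<and> H = induced G S \<and> oirreducible H}"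

end

theory Submission
  imports Defs
begin


definition trip :: "(nat\<times>nat) set \<Rightarrow> nat\<Rightarrow>nat\<Rightarrow>nat\<Rightarrow> ograph" where
 "trip E a b c = (3, {(i,j). (i,j)=(1,2) \<and> (a,b)\<in>E \<or> (i,j)=(1,3) \<and> (a,c)\<in>E \<or> (i,j)=(2,3) \<and> (b,c)\<in>E})"

definition quad :: "(nat\<times>nat) set \<Rightarrow> nat\<Rightarrow>nat\<Rightarrow>nat\<Rightarrow>nat\<Rightarrow> ograph" where
 "quad E a b c d = (4, {(i,j). (i,j)=(1,2) \<and> (a,b)\<in>E \<or> (i,j)=(1,3) \<and> (a,c)\<in>E \<or> (i,j)=(1,4) \<and> (a,d)\<in>E
    \<or> (i,j)=(2,3) \<and> (b,c)\<in>E \<or> (i,j)=(2,4) \<and> (b,d)\<in>E \<or> (i,j)=(3,4) \<and> (c,d)\<in>E})"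

lemma induced3: assumes "a<b" "b<c" shows "induced G {a,b,c} = trip (snd G) a b c"
proof -
  have s: "sorted_list_of_set {a,b,c} = [a,b,c]"
    using sorted_list_of_set.idem_if_sorted_distinct[of "[a,b,c]"] assms by simp
  have cd: "card {a,b,c} = 3" using assms by auto
  have r: "{(i,j). 1 \<le> i \<and> i < j \<and> j \<le> (3::nat) \<and> P i j} = {(i,j). (i,j) \<in> {(1,2),(1,3),(2,3)} \<and> P i j}" for P
    by (auto simp: numeral_eq_Suc le_Suc_eq)
  show ?thesis unfolding induced_def trip_def Let_def s cd
    unfolding r by auto
qed

lemma induced4: assumes "a<b" "b<c" "c<d" shows "induced G {a,b,c,d} = quad (snd G) a b c d"
proof -
  have s: "sorted_list_of_set {a,b,c,d} = [a,b,c,d]"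
    using sorted_list_of_set.idem_if_sorted_distinct[of "[a,b,c,d]"] assms by simp
  have cd: "card {a,b,c,d} = 4" using assms by auto
  have r: "{(i,j). 1 \<le> i \<and> i < j \<and> j \<le> (4::nat) \<and> P i j} = {(i,j). (i,j) \<in> {(1,2),(1,3),(1,4),(2,3),(2,4),(3,4)} \<and> P i j}" for P
    by (auto simp: numeral_eq_Suc le_Suc_eq)
  show ?thesis unfolding induced_def quad_def Let_def s cd
    unfolding r by auto
qed

lemma cover: assumes "ordered_graph G" "oirreducible G" "1 \<le> u" "u < fst G"
  shows "\<exists>i j. (i,j) \<in> snd G \<and> i \<le> u \<and> u < j"
proof -
  have "\<not> separates G u (Suc u)" using assms(2) unfolding oirreducible_def by blast
  then show ?thesis using assms unfolding separates_def by force
qed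

lemma irrI: assumes "\<And>u. 1 \<le> u \<Longrightarrow> u < fst H \<Longrightarrow> \<exists>i j. (i,j)\<in>snd H \<and> i \<le> u \<and> u < j"
  shows "oirreducible H"
  unfolding oirreducible_def
proof clarify
  fix u v assume "separates H u v"
  then have "1 \<le> u" "u < fst H" "u < v" and h: "\<forall>(i,j)\<in>snd H. j \<le> u \<or> v \<le> i"
    unfolding separates_def by auto
  then obtain i j where "(i,j)\<in>snd H" "i \<le> u" "u < j" using assms[of u] by auto
  with h \<open>u<v\<close> show False by fastforce
qed

lemma fin_irr: "finite (irr_induced G k)"
proof -
  have "irr_induced G k \<subseteq> induced G ` Pow {1..fst G}" unfolding irr_induced_def by auto
  then show ?thesis by (rule finite_subset) auto
qed

lemma trip_irr: "(a,c)\<in>E \<or> (a,b)\<in>E \<and> (b,c)\<in>E \<Longrightarrow> oirreducible (trip E a b c)"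
  apply (rule irrI)
  apply (simp add: trip_def)
  by (metis le_Suc_eq le_less_Suc_eq linorder_not_le nat_1_add_1 numeral_3_eq_3 one_le_numeral plus_1_eq_Suc)


lemma quad_mem:
  "(1,2) \<in> snd (quad E a b c d) \<longleftrightarrow> (a,b)\<in>E"
  "(1,3) \<in> snd (quad E a b c d) \<longleftrightarrow> (a,c)\<in>E"
  "(1,4) \<in> snd (quad E a b c d) \<longleftrightarrow> (a,d)\<in>E"
  "(2,3) \<in> snd (quad E a b c d) \<longleftrightarrow> (b,c)\<in>E"
  "(2,4) \<in> snd (quad E a b c d) \<longleftrightarrow> (b,d)\<in>E"
  "(3,4) \<in> snd (quad E a b c d) \<longleftrightarrow> (c,d)\<in>E"
  unfolding quad_def by simp_all

lemma quad_irr: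
  assumes "((a,b)\<in>E \<or> (a,c)\<in>E \<or> (a,d)\<in>E) \<and> ((a,c)\<in>E \<or> (a,d)\<in>E \<or> (b,c)\<in>E \<or> (b,d)\<in>E) \<and> ((a,d)\<in>E \<or> (b,d)\<in>E \<or> (c,d)\<in>E)"
  shows "oirreducible (quad E a b c d)"
proof (rule irrI)
  let ?Q = "snd (quad E a b c d)"
  fix u assume u: "1 \<le> u" "u < fst (quad E a b c d)"
  then have "u = 1 \<or> u = 2 \<or> u = 3" by (simp add: quad_def) arith
  moreover have "(1,2) \<in> ?Q \<or> (1,3) \<in> ?Q \<or> (1,4) \<in> ?Q" using assms unfolding quad_mem by blast
  moreover have "(1,3) \<in> ?Q \<or> (1,4) \<in> ?Q \<or> (2,3) \<in> ?Q \<or> (2,4) \<in> ?Q" using assms unfolding quad_mem by blast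
  moreover have "(1,4) \<in> ?Q \<or> (2,4) \<in> ?Q \<or> (3,4) \<in> ?Q" using assms unfolding quad_mem by blast
  ultimately show "\<exists>i j. (i,j)\<in>?Q \<and> i \<le> u \<and> u < j"
    by (elim disjE) force+
qed

locale og =
  fixes G :: ograph
  assumes ord: "ordered_graph G" and irr: "oirreducible G"
    and c3: "card (irr_induced G 3) \<le> 1" and c4: "card (irr_induced G 4) \<le> 1"
begin

abbreviation E :: "nat \<Rightarrow> nat \<Rightarrow> bool" where "E i j \<equiv> (i,j) \<in> snd G"

lemma eb: "E i j \<Longrightarrow> 1 \<le> i \<and> i < j \<and> j \<le> fst G"
  using ord unfolding ordered_graph_def by auto

lemma n1: "1 \<le> fst G" using ord unfolding ordered_graph_def by auto

lemma cov: "1 \<le> u \<Longrightarrow> u < fst G \<Longrightarrow> \<exists>i j. E i j \<and> i \<le> u \<and> u < j"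
  using cover[OF ord irr] by blast

lemma U3:
  assumes "1\<le>a" "a<b" "b<c" "c\<le>fst G" "E a c \<or> E a b \<and> E b c"
    "1\<le>a'" "a'<b'" "b'<c'" "c'\<le>fst G" "E a' c' \<or> E a' b' \<and> E b' c'"
  shows "E a b = E a' b' \<and> E a c = E a' c' \<and> E b c = E b' c'"
proof -
  have m1: "trip (snd G) a b c \<in> irr_induced G 3"
    unfolding irr_induced_def mem_Collect_eq
  proof (intro exI conjI)
    show "{a,b,c} \<subseteq> {1..fst G}" using assms by auto
    show "card {a,b,c} = 3" using assms by auto
    show "trip (snd G) a b c = induced G {a,b,c}" using induced3 assms by simp
    show "oirreducible (trip (snd G) a b c)" using assms(5) by (intro trip_irr)
  qed
  have m2: "trip (snd G) a' b' c' \<in> irr_induced G 3"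
    unfolding irr_induced_def mem_Collect_eq
  proof (intro exI conjI)
    show "{a',b',c'} \<subseteq> {1..fst G}" using assms by auto
    show "card {a',b',c'} = 3" using assms by auto
    show "trip (snd G) a' b' c' = induced G {a',b',c'}" using induced3 assms by simp
    show "oirreducible (trip (snd G) a' b' c')" using assms(10) by (intro trip_irr)
  qed
  have "trip (snd G) a b c = trip (snd G) a' b' c'"
    using c3 fin_irr[of G 3] m1 m2 by (metis One_nat_def card_le_Suc0_iff_eq)
  then have "snd (trip (snd G) a b c) = snd (trip (snd G) a' b' c')" by simp
  then have "\<forall>x. x \<in> snd (trip (snd G) a b c) \<longleftrightarrow> x \<in> snd (trip (snd G) a' b' c')" by simp
  then have h: "\<And>x. x \<in> snd (trip (snd G) a b c) \<longleftrightarrow> x \<in> snd (trip (snd G) a' b' c')" by blast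
  have "E a b = E a' b'" using h[of "(1,2)"] unfolding trip_def by simp
  moreover have "E a c = E a' c'" using h[of "(1,3)"] unfolding trip_def by simp
  moreover have "E b c = E b' c'" using h[of "(2,3)"] unfolding trip_def by simp
  ultimately show ?thesis by blast
qed

definition irr4 where "irr4 a b c d \<longleftrightarrow> (E a b \<or> E a c \<or> E a d) \<and> (E a c \<or> E a d \<or> E b c \<or> E b d) \<and> (E a d \<or> E b d \<or> E c d)"

lemma U4:
  assumes "1\<le>a" "a<b" "b<c" "c<d" "d\<le>fst G" "irr4 a b c d"
    "1\<le>a'" "a'<b'" "b'<c'" "c'<d'" "d'\<le>fst G" "irr4 a' b' c' d'"
  shows "E a b = E a' b' \<and> E a c = E a' c' \<and> E a d = E a' d' \<and> E b c = E b' c' \<and> E b d = E b' d' \<and> E c d = E c' d'"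
proof -
  have m1: "quad (snd G) a b c d \<in> irr_induced G 4"
    unfolding irr_induced_def mem_Collect_eq
  proof (intro exI conjI)
    show "{a,b,c,d} \<subseteq> {1..fst G}" using assms by auto
    show "card {a,b,c,d} = 4" using assms by auto
    show "quad (snd G) a b c d = induced G {a,b,c,d}" using induced4 assms by simp
    show "oirreducible (quad (snd G) a b c d)" using assms(6) unfolding irr4_def by (intro quad_irr)
  qed
  have m2: "quad (snd G) a' b' c' d' \<in> irr_induced G 4"
    unfolding irr_induced_def mem_Collect_eq
  proof (intro exI conjI)
    show "{a',b',c',d'} \<subseteq> {1..fst G}" using assms by auto
    show "card {a',b',c',d'} = 4" using assms by auto
    show "quad (snd G) a' b' c' d' = induced G {a',b',c',d'}" using induced4 assms by simp
    show "oirreducible (quad (snd G) a' b' c' d')" using assms(12) unfolding irr4_def by (intro quad_irr)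
  qed
  have "quad (snd G) a b c d = quad (snd G) a' b' c' d'"
    using c4 fin_irr[of G 4] m1 m2 by (metis One_nat_def card_le_Suc0_iff_eq)
  then have "snd (quad (snd G) a b c d) = snd (quad (snd G) a' b' c' d')" by simp
  then have "\<forall>x. x \<in> snd (quad (snd G) a b c d) \<longleftrightarrow> x \<in> snd (quad (snd G) a' b' c' d')" by simp
  then have h: "\<And>x. x \<in> snd (quad (snd G) a b c d) \<longleftrightarrow> x \<in> snd (quad (snd G) a' b' c' d')" by blast
  have "E a b = E a' b'" using h[of "(1,2)"] unfolding quad_def by simp
  moreover have "E a c = E a' c'" using h[of "(1,3)"] unfolding quad_def by simp
  moreover have "E a d = E a' d'" using h[of "(1,4)"] unfolding quad_def by simp
  moreover have "E b c = E b' c'" using h[of "(2,3)"] unfolding quad_def by simp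
  moreover have "E b d = E b' d'" using h[of "(2,4)"] unfolding quad_def by simp
  moreover have "E c d = E c' d'" using h[of "(3,4)"] unfolding quad_def by simp
  ultimately show ?thesis by blast
qed

end


context og begin

lemma caseK:
  assumes P: "\<And>a b c. 1\<le>a \<Longrightarrow> a<b \<Longrightarrow> b<c \<Longrightarrow> c\<le>fst G \<Longrightarrow> E a c \<or> E a b \<and> E b c \<Longrightarrow> E a b \<and> E a c \<and> E b c"
  shows "G \<in> calJ"
proof -
  have A: "k \<le> fst G \<longrightarrow> E 1 k" if "2 \<le> k" for k
    using that
  proof (induction k rule: nat_induct_at_least)
    case base
    show ?case
    proof
      assume "2 \<le> fst G"
      obtain p q where pq: "E p q" "p \<le> 1" "1 < q" using cov[of 1] \<open>2\<le>fst G\<close> by auto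
      then have "p = 1" using eb by force
      show "E 1 2"
      proof (cases "q = 2")
        case True with pq \<open>p=1\<close> show ?thesis by simp
      next
        case False then have "2 < q" using \<open>1<q\<close> by simp
        then show ?thesis using P[of 1 2 q] pq \<open>p=1\<close> eb[OF pq(1)] by auto
      qed
    qed
  next
    case (Suc k)
    show ?case
    proof
      assume k1: "Suc k \<le> fst G"
      then have Ek: "E 1 k" using Suc by simp
      obtain p q where pq: "E p q" "p \<le> k" "k < q" using cov[of k] Suc.hyps k1 by auto
      have p1: "1 \<le> p" "q \<le> fst G" using eb[OF pq(1)] by auto
      have E1p: "E 1 p" if "1 < p"
      proof (cases "p = k")
        case True with Ek show ?thesis by simp
      next
        case False then show ?thesis using P[of 1 p k] Ek that pq(2) Suc.hyps k1 by auto
      qed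
      have E1q: "E 1 q"
      proof (cases "p = 1")
        case True with pq show ?thesis by simp
      next
        case False then have "1 < p" using p1 by simp
        then show ?thesis using P[of 1 p q] E1p pq p1 by auto
      qed
      show "E 1 (Suc k)"
      proof (cases "q = Suc k")
        case True with E1q show ?thesis by simp
      next
        case False then show ?thesis using P[of 1 "Suc k" q] E1q pq p1 Suc.hyps by auto
      qed
    qed
  qed
  have "snd G = {(i,j). 1 \<le> i \<and> i < j \<and> j \<le> fst G}"
  proof (intro set_eqI iffI)
    fix x :: "nat \<times> nat" assume "x \<in> snd G" then show "x \<in> {(i,j). 1 \<le> i \<and> i < j \<and> j \<le> fst G}" using eb by (cases x) auto
  next
    fix x :: "nat \<times> nat" assume "x \<in> {(i,j). 1 \<le> i \<and> i < j \<and> j \<le> fst G}"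
    then obtain i j where x: "x = (i,j)" "1 \<le> i" "i < j" "j \<le> fst G" by auto
    show "x \<in> snd G"
    proof (cases "i = 1")
      case True then show ?thesis using A[of j] x by auto
    next
      case False then show ?thesis using P[of 1 i j] A[of j] x by auto
    qed
  qed
  then have "G = J1 (fst G)" unfolding J1_def by (simp add: prod_eq_iff)
  then show ?thesis unfolding calJ_def using n1 by blast
qed

lemma caseJ3:
  assumes P: "\<And>a b c. 1\<le>a \<Longrightarrow> a<b \<Longrightarrow> b<c \<Longrightarrow> c\<le>fst G \<Longrightarrow> E a c \<or> E a b \<and> E b c \<Longrightarrow> E a b \<and> E a c \<and> \<not> E b c"
  shows "G \<in> calJ"
proof -
  have A: "k \<le> fst G \<longrightarrow> E 1 k" if "2 \<le> k" for k
    using that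
  proof (induction k rule: nat_induct_at_least)
    case base
    show ?case
    proof
      assume "2 \<le> fst G"
      obtain p q where pq: "E p q" "p \<le> 1" "1 < q" using cov[of 1] \<open>2\<le>fst G\<close> by auto
      then have "p = 1" using eb by force
      show "E 1 2"
      proof (cases "q = 2")
        case True with pq \<open>p=1\<close> show ?thesis by simp
      next
        case False then have "2 < q" using \<open>1<q\<close> by simp
        then show ?thesis using P[of 1 2 q] pq \<open>p=1\<close> eb[OF pq(1)] by auto
      qed
    qed
  next
    case (Suc k)
    show ?case
    proof
      assume k1: "Suc k \<le> fst G"
      then have Ek: "E 1 k" using Suc by simp
      obtain p q where pq: "E p q" "p \<le> k" "k < q" using cov[of k] Suc.hyps k1 by auto
      have p1: "1 \<le> p" "q \<le> fst G" using eb[OF pq(1)] by auto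
      have E1p: "E 1 p" if "1 < p"
      proof (cases "p = k")
        case True with Ek show ?thesis by simp
      next
        case False then show ?thesis using P[of 1 p k] Ek that pq(2) Suc.hyps k1 by auto
      qed
      have E1q: "E 1 q"
      proof (cases "p = 1")
        case True with pq show ?thesis by simp
      next
        case False then have "1 < p" using p1 by simp
        then show ?thesis using P[of 1 p q] E1p pq p1 by auto
      qed
      show "E 1 (Suc k)"
      proof (cases "q = Suc k")
        case True with E1q show ?thesis by simp
      next
        case False then show ?thesis using P[of 1 "Suc k" q] E1q pq p1 Suc.hyps by auto
      qed
    qed
  qed
  have "snd G = {(1,i) | i. 2 \<le> i \<and> i \<le> fst G}"
  proof (intro set_eqI iffI)
    fix x :: "nat \<times> nat" assume x: "x \<in> snd G"
    then obtain i j where ij: "x = (i,j)" "E i j" by (cases x) auto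
    have "i = 1"
    proof (rule ccontr)
      assume "i \<noteq> 1"
      then show False using P[of 1 i j] A[of i] eb[OF ij(2)] ij by auto
    qed
    then show "x \<in> {(1,i) | i. 2 \<le> i \<and> i \<le> fst G}" using eb[OF ij(2)] ij by auto
  next
    fix x :: "nat \<times> nat" assume "x \<in> {(1,i) | i. 2 \<le> i \<and> i \<le> fst G}"
    then show "x \<in> snd G" using A by auto
  qed
  then have "G = J3 (fst G)" unfolding J3_def by (simp add: prod_eq_iff)
  then show ?thesis unfolding calJ_def using n1 by blast
qed

lemma caseL:
  assumes P: "\<And>a b c. 1\<le>a \<Longrightarrow> a<b \<Longrightarrow> b<c \<Longrightarrow> c\<le>fst G \<Longrightarrow> E a c \<or> E a b \<and> E b c \<Longrightarrow> E a b \<and> \<not> E a c \<and> E b c"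
  shows "G \<in> calJ"
proof -
  have short: "j = Suc i" if "E i j" for i j
  proof (rule ccontr)
    assume "j \<noteq> Suc i"
    then show False using P[of i "Suc i" j] eb[OF that] that by auto
  qed
  have "snd G = {(i,i+1) | i. 1 \<le> i \<and> i \<le> fst G - 1}"
  proof (intro set_eqI iffI)
    fix x :: "nat \<times> nat" assume x: "x \<in> snd G"
    then obtain i j where ij: "x = (i,j)" "E i j" by (cases x) auto
    then show "x \<in> {(i,i+1) | i. 1 \<le> i \<and> i \<le> fst G - 1}" using eb[OF ij(2)] short[OF ij(2)] by auto
  next
    fix x :: "nat \<times> nat" assume "x \<in> {(i,i+1) | i. 1 \<le> i \<and> i \<le> fst G - 1}"
    then obtain i where i: "x = (i, Suc i)" "1 \<le> i" "i < fst G" by auto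
    obtain p q where pq: "E p q" "p \<le> i" "i < q" using cov[of i] i by auto
    then have "p = i" "q = Suc i" using short[OF pq(1)] by auto
    then show "x \<in> snd G" using pq i by simp
  qed
  then have "G = Lg (fst G)" unfolding Lg_def by (simp add: prod_eq_iff)
  then show ?thesis unfolding calJ_def using n1 by blast
qed

lemma caseJ4:
  assumes P: "\<And>a b c. 1\<le>a \<Longrightarrow> a<b \<Longrightarrow> b<c \<Longrightarrow> c\<le>fst G \<Longrightarrow> E a c \<or> E a b \<and> E b c \<Longrightarrow> \<not> E a b \<and> E a c \<and> E b c"
  shows "G \<in> calJ"
proof -
  define n where "n = fst G"
  have B: "Suc d < n \<longrightarrow> E (n - Suc d) n" for d
  proof (induction d)
    case 0
    show ?case
    proof
      assume "Suc 0 < n"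
      have "1 \<le> n - 1" "n - 1 < fst G" using \<open>Suc 0 < n\<close> n_def by auto
      then obtain p q where pq: "E p q" "p \<le> n - 1" "n - 1 < q" using cov[of "n-1"] by blast
      then have "q = n" using eb[OF pq(1)] n_def by auto
      show "E (n - Suc 0) n"
      proof (cases "p = n - 1")
        case True with pq \<open>q=n\<close> show ?thesis by simp
      next
        case False then show ?thesis using P[of p "n-1" n] pq \<open>q=n\<close> eb[OF pq(1)] n_def by auto
      qed
    qed
  next
    case (Suc d)
    show ?case
    proof
      assume d: "Suc (Suc d) < n"
      define k where "k = n - Suc (Suc d)"
      have k: "1 \<le> k" "k < n" "Suc k = n - Suc d" using d unfolding k_def by auto
      have Ek1: "E (Suc k) n" using Suc d k by simp
      obtain p q where pq: "E p q" "p \<le> k" "k < q" using cov[of k] k n_def by auto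
      have p1: "1 \<le> p" "q \<le> n" using eb[OF pq(1)] n_def by auto
      have Eqn: "E q n" if "q < n"
      proof (cases "q = Suc k")
        case True with Ek1 show ?thesis by simp
      next
        case False then show ?thesis using P[of "Suc k" q n] Ek1 that pq k n_def by auto
      qed
      have Epn: "E p n"
      proof (cases "q = n")
        case True with pq show ?thesis by simp
      next
        case False then have "q < n" using p1 by simp
        then show ?thesis using P[of p q n] Eqn pq p1 n_def by auto
      qed
      show "E (n - Suc (Suc d)) n"
      proof (cases "p = k")
        case True with Epn k_def show ?thesis by simp
      next
        case False then show ?thesis using P[of p k n] Epn pq p1 k k_def n_def by auto
      qed
    qed
  qed
  have A: "E k n" if "1 \<le> k" "k < n" for k
    using B[of "n - Suc k"] that by auto
  have "snd G = {(i,n) | i. 1 \<le> i \<and> i \<le> n - 1}"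
  proof (intro set_eqI iffI)
    fix x :: "nat \<times> nat" assume x: "x \<in> snd G"
    then obtain i j where ij: "x = (i,j)" "E i j" by (cases x) auto
    have "j = n"
    proof (rule ccontr)
      assume "j \<noteq> n"
      then show False using P[of i j n] A[of j] eb[OF ij(2)] ij n_def by auto
    qed
    then show "x \<in> {(i,n) | i. 1 \<le> i \<and> i \<le> n - 1}" using eb[OF ij(2)] ij n_def by auto
  next
    fix x :: "nat \<times> nat" assume "x \<in> {(i,n) | i. 1 \<le> i \<and> i \<le> n - 1}"
    then show "x \<in> snd G" using A by auto
  qed
  then have "G = J4 (fst G)" unfolding J4_def n_def by (simp add: prod_eq_iff)
  then show ?thesis unfolding calJ_def using n1 by blast
qed

end


context og begin

lemma caseJ2:
  assumes P: "\<And>a b c. 1\<le>a \<Longrightarrow> a<b \<Longrightarrow> b<c \<Longrightarrow> c\<le>fst G \<Longrightarrow> E a c \<or> E a b \<and> E b c \<Longrightarrow> \<not> E a b \<and> E a c \<and> \<not> E b c"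
  and n3: "3 \<le> fst G"
  shows "G \<in> calJ"
proof -
  define n where "n = fst G"
  have M1: "b = c" if "E a b" "E a c" for a b c
  proof (rule ccontr)
    assume "b \<noteq> c"
    then have "b < c \<or> c < b" by arith
    then show False
    proof
      assume "b < c" then show False using P[of a b c] that eb[OF that(1)] eb[OF that(2)] by auto
    next
      assume "c < b" then show False using P[of a c b] that eb[OF that(1)] eb[OF that(2)] by auto
    qed
  qed
  have M2: "a = b" if "E a c" "E b c" for a b c
  proof (rule ccontr)
    assume "a \<noteq> b"
    then have "a < b \<or> b < a" by arith
    then show False
    proof
      assume "a < b" then show False using P[of a b c] that eb[OF that(1)] eb[OF that(2)] by auto
    next
      assume "b < a" then show False using P[of b a c] that eb[OF that(1)] eb[OF that(2)] by auto
    qed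
  qed
  have M3: "False" if "E a b" "E b c" for a b c
    using P[of a b c] that eb[OF that(1)] eb[OF that(2)] by auto
  have "\<exists>i j. E i j \<and> i \<le> 1 \<and> 1 < j" using cov[of 1] n3 by auto
  then obtain p0 j where "E p0 j" "p0 \<le> 1" using eb by blast
  then have j: "E 1 j" using eb[of p0 j] by (metis le_antisym)
  have jn: "1 < j" "j \<le> n" using eb[OF j] n_def by auto
  show ?thesis
  proof (cases "j < n")
    case True
    have "\<exists>i k. E i k \<and> i \<le> j \<and> j < k" using cov[of j] True jn n_def by auto
    then obtain p q where pq: "E p q" "p \<le> j" "j < q" by blast
    have "p \<noteq> 1" using M1[OF j, of q] pq by auto
    moreover have "p \<noteq> j" using M3[OF j] pq(1) by auto
    ultimately have pp: "1 < p" "p < j" "q \<le> n" using eb[OF pq(1)] pq n_def by auto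
    have i4ref: "irr4 1 p j q" unfolding irr4_def using j pq by auto
    have nE1q: "\<not> E 1 q" using M1[OF j, of q] pq by auto
    have short: "c \<le> a + 2" if "E a c" for a c
    proof (rule ccontr)
      assume "\<not> c \<le> a+2"
      then have "irr4 a (a+1) (a+2) c" using that unfolding irr4_def by auto
      then have "E a c = E 1 q" using U4[of a "a+1" "a+2" c 1 p j q] eb[OF that] i4ref pp pq n_def \<open>\<not> c \<le> a+2\<close> by auto
      then show False using that nE1q by simp
    qed
    have j3: "j = 3" "p = 2" using short[OF j] pp by auto
    have q4: "q = 4" using short[OF pq(1)] pq j3 by auto
    have E13: "E 1 3" and E24: "E 2 4" using j pq j3 q4 by auto
    have n4: "n = 4"
    proof (rule ccontr)
      assume "n \<noteq> 4"
      then have "4 < n" using pp q4 by auto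
      then have "\<exists>i k. E i k \<and> i \<le> 4 \<and> 4 < k" using cov[of 4] n_def by auto
      then obtain p' q' where pq': "E p' q'" "p' \<le> 4" "4 < q'" by blast
      then have "p' = 1 \<or> p' = 2 \<or> p' = 3 \<or> p' = 4" using eb[OF pq'(1)] by auto
      then show False
      proof (elim disjE)
        assume "p' = 1" then show False using M1[OF E13, of q'] pq' by auto
      next
        assume "p' = 2" then show False using M1[OF E24, of q'] pq' by auto
      next
        assume "p' = 3" then show False using M3[OF E13, of q'] pq' by auto
      next
        assume "p' = 4" then show False using M3[OF E24, of q'] pq' by auto
      qed
    qed
    have "snd G = {(1,3),(2,4)}"
    proof (intro set_eqI iffI)
      fix x :: "nat \<times> nat" assume x: "x \<in> snd G"
      then obtain a b where ab: "x = (a,b)" "E a b" by (cases x) auto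
      then have "a = 1 \<or> a = 2 \<or> a = 3" using eb[OF ab(2)] n4 n_def by auto
      then show "x \<in> {(1,3),(2,4)}"
      proof (elim disjE)
        assume "a = 1" then show ?thesis using M1[OF E13, of b] ab by auto
      next
        assume "a = 2" then show ?thesis using M1[OF E24, of b] ab by auto
      next
        assume "a = 3" then show ?thesis using M3[OF E13, of b] ab by auto
      qed
    next
      fix x :: "nat \<times> nat" assume "x \<in> {(1,3),(2,4)}"
      then show "x \<in> snd G" using E13 E24 by auto
    qed
    then have "G = Q1" unfolding Q1_def using n4 n_def by (simp add: prod_eq_iff)
    then show ?thesis unfolding calJ_def by blast
  next
    case False
    then have E1n: "E 1 n" using j jn by auto
    show ?thesis
    proof (cases "n = 3")
      case True
      have "snd G = {(1,3)}"
      proof (intro set_eqI iffI)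
        fix x :: "nat \<times> nat" assume x: "x \<in> snd G"
        then obtain a b where ab: "x = (a,b)" "E a b" by (cases x) auto
        then have "a = 1 \<or> a = 2" using eb[OF ab(2)] True n_def by auto
        then show "x \<in> {(1,3)}"
        proof (elim disjE)
          assume "a = 1" then show ?thesis using M1[OF E1n, of b] ab True by auto
        next
          assume "a = 2" then have "b = 3" using eb[OF ab(2)] True n_def by auto
          then show ?thesis using M2[OF E1n, of a] ab True \<open>a=2\<close> by auto
        qed
      next
        fix x :: "nat \<times> nat" assume "x \<in> {(1,3)}"
        then show "x \<in> snd G" using E1n True by auto
      qed
      then have "G = J2 3" unfolding J2_def using True n_def by (simp add: prod_eq_iff)
      then have "\<exists>n\<ge>1. G = J2 n" by (intro exI[of _ 3]) simp
      then show ?thesis unfolding calJ_def by blast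
    next
      case False
      then have n4: "4 \<le> n" using n3 n_def by auto
      show ?thesis
      proof (cases "E 2 3")
        case True
        have n4': "n = 4"
        proof (rule ccontr)
          assume "n \<noteq> 4"
          then have "4 < n" using n4 by auto
          then have "E 2 3 = E 2 4"
            using U4[of 1 2 3 n 1 2 4 n] E1n n_def unfolding irr4_def by auto
          then show False using True M1[of 2 3 4] by auto
        qed
        have "snd G = {(1,4),(2,3)}"
        proof (intro set_eqI iffI)
          fix x :: "nat \<times> nat" assume x: "x \<in> snd G"
          then obtain a b where ab: "x = (a,b)" "E a b" by (cases x) auto
          then have "a = 1 \<or> a = 2 \<or> a = 3" using eb[OF ab(2)] n4' n_def by auto
          then show "x \<in> {(1,4),(2,3)}"
          proof (elim disjE)
            assume "a = 1" then show ?thesis using M1[OF E1n, of b] ab n4' by auto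
          next
            assume "a = 2" then show ?thesis using M1[OF True, of b] ab by auto
          next
            assume "a = 3" then have "b = 4" using eb[OF ab(2)] n4' n_def by auto
            then show ?thesis using M2[OF E1n, of a] ab n4' \<open>a=3\<close> by auto
          qed
        next
          fix x :: "nat \<times> nat" assume "x \<in> {(1,4),(2,3)}"
          then show "x \<in> snd G" using E1n True n4' by auto
        qed
        then have "G = Q2" unfolding Q2_def using n4' n_def by (simp add: prod_eq_iff)
        then show ?thesis unfolding calJ_def by blast
      next
        case False
        have "snd G = {(1,n)}"
        proof (intro set_eqI iffI)
          fix x :: "nat \<times> nat" assume x: "x \<in> snd G"
          then obtain a b where ab: "x = (a,b)" "E a b" by (cases x) auto
          show "x \<in> {(1,n)}"
          proof (cases "a = 1")
            case True then show ?thesis using M1[OF E1n, of b] ab by auto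
          next
            case a1: False
            have "b \<noteq> n" using M2[OF E1n, of a] ab a1 by auto
            then have bb: "1 < a" "a < b" "b < n" using eb[OF ab(2)] a1 n_def by auto
            then have "E a b = E 2 3"
              using U4[of 1 a b n 1 2 3 n] E1n n_def n4 unfolding irr4_def by auto
            then show ?thesis using False ab by auto
          qed
        next
          fix x :: "nat \<times> nat" assume "x \<in> {(1,n)}"
          then show "x \<in> snd G" using E1n by auto
        qed
        then have "G = J2 n" unfolding J2_def using n4 n_def by (simp add: prod_eq_iff)
        then have "\<exists>n\<ge>1. G = J2 n" using n4 by (intro exI[of _ n]) simp
        then show ?thesis unfolding calJ_def by blast
      qed
    qed
  qed
qed

theorem main: "G \<in> calJ"
proof -
  consider "fst G = 1" | "fst G = 2" | "3 \<le> fst G" using n1 by linarith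
  then show ?thesis
  proof cases
    case 1
    then have "snd G = {}" using eb by fastforce
    moreover have "{(i,j). 1 \<le> i \<and> i < j \<and> j \<le> (1::nat)} = {}" by auto
    ultimately have "G = J1 1" unfolding J1_def using 1 by (simp add: prod_eq_iff)
    then show ?thesis unfolding calJ_def by blast
  next
    case 2
    have "snd G = {(1,2)}"
    proof (intro set_eqI iffI)
      fix x :: "nat \<times> nat" assume x: "x \<in> snd G"
      then obtain a b where ab: "x = (a,b)" "E a b" by (cases x) auto
      then show "x \<in> {(1,2)}" using eb[OF ab(2)] 2 by auto
    next
      fix x :: "nat \<times> nat" assume "x \<in> {(1,2)}"
      have "\<exists>i j. E i j \<and> i \<le> 1 \<and> 1 < j" using cov[of 1] 2 by auto
      then obtain a b where "E a b" "a \<le> 1" "1 < b" by blast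
      then have "a = 1" "b = 2" using eb[of a b] 2 by auto
      then show "x \<in> snd G" using \<open>E a b\<close> \<open>x \<in> {(1,2)}\<close> by auto
    qed
    then have "G = J2 2" unfolding J2_def using 2 by (simp add: prod_eq_iff)
    then have "\<exists>n\<ge>1. G = J2 n" by (intro exI[of _ 2]) simp
    then show ?thesis unfolding calJ_def by blast
  next
    case 3
    have "\<exists>i j. E i j \<and> i \<le> 1 \<and> 1 < j" using cov[of 1] 3 by auto
    then obtain p0 j where "E p0 j" "p0 \<le> 1" "1 < j" by blast
    then have j: "E 1 j" using eb[of p0 j] by (metis le_antisym)
    obtain c where c: "2 < c" "c \<le> fst G" "E 1 c \<or> E 1 2 \<and> E 2 c"
    proof (cases "j = 2")
      case False
      then show ?thesis using that[of j] j eb[OF j] by auto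
    next
      case True
      have "\<exists>i k. E i k \<and> i \<le> 2 \<and> 2 < k" using cov[of 2] 3 by auto
      then obtain p q where pq: "E p q" "p \<le> 2" "2 < q" by blast
      then have "p = 1 \<or> p = 2" using eb[OF pq(1)] by auto
      then show ?thesis using that[of q] pq j True eb[OF pq(1)] by auto
    qed
    have P: "E a b = E 1 2 \<and> E a c' = E 1 c \<and> E b c' = E 2 c"
      if "1\<le>a" "a<b" "b<c'" "c'\<le>fst G" "E a c' \<or> E a b \<and> E b c'" for a b c'
      using U3[of a b c' 1 2 c] that c by auto
    consider "E 1 2" "E 1 c" "E 2 c" | "E 1 2" "E 1 c" "\<not> E 2 c" | "\<not> E 1 2" "E 1 c" "E 2 c"
      | "\<not> E 1 2" "E 1 c" "\<not> E 2 c" | "E 1 2" "\<not> E 1 c" "E 2 c" using c(3) by blast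
    then show ?thesis
    proof cases
      case 1 show ?thesis apply (rule caseK) subgoal for a b c' using P[of a b c'] 1 by simp done
    next
      case 2 show ?thesis apply (rule caseJ3) subgoal for a b c' using P[of a b c'] 2 by simp done
    next
      case 3 show ?thesis apply (rule caseJ4) subgoal for a b c' using P[of a b c'] 3 by simp done
    next
      case 4 show ?thesis apply (rule caseJ2) subgoal for a b c' using P[of a b c'] 4 by simp using 3 by simp
    next
      case 5 show ?thesis apply (rule caseL) subgoal for a b c' using P[of a b c'] 5 by simp done
    qed
  qed
qed

end

theorem lemma18:
  assumes "ordered_graph G"
    and "oirreducible G"
    and "card (irr_induced G 3) \<le> 1"
    and "card (irr_induced G 4) \<le> 1"
  shows "G \<in> calJ"
  using og.main[OF og.intro[OF assms]] .

end
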